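(* Let $G=(V,E)$ be an undirected graph with $n=|V|$ nodes, and let $L_0 \subseteq V$ be any set of nodes, with $L_1$, $L_2$, $L_{\geq 2}$, $d^+(L_0)$, the reaching attempt, $rs(v)$ and the procedure Sample defined as in the context. Suppose the estimate $\bar\ell_{\geq 2}$ used by Sample satisfies $\bar\ell_{\geq 2} \in [(1-\delta)|L_{\geq 2}|, (1+\delta)|L_{\geq 2}|]$, and that the baseline reachability $rs_0$ used by Sample is the $\varepsilon$-th percentile of the reachability distribution over $L_{\geq 2}$, i.e., at least a $(1-\varepsilon)$ fraction of the nodes $v \in L_{\geq 2}$ satisfy $rs(v) \ge rs_0$. Then the distribution of the node output by Sample is $(\varepsilon + \delta + O((\varepsilon+\delta)^2))$-close to the uniform distribution on $V$ in total variation distance. Furthermore, every node of $G$ is output by Sample with probability at most $(1 + \varepsilon + \delta + O((\varepsilon+\delta)^2))/n$.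
   Context: Layers: given $L_0 \subseteq V$, let $L_1 = \bigcup_{v\in L_0} N(v) \setminus L_0$ (where $N(v)$ is the neighbor set of $v$), let $L_2$ be the set of nodes at distance exactly $2$ from $L_0$, and let $L_{\geq 2} = V \setminus (L_0 \cup L_1)$. Let $G_{\geq 2}$ be the graph with node set $L_{\geq 2}$ whose edges are the edges of $G$ between $L_2$ and $L_{\geq 2}\setminus L_2$ and the edges of $G$ with both endpoints in $L_{\geq 2}\setminus L_2$ (edges with both endpoints in $L_2$ are excluded); for $v \in L_{\geq 2}$, $C(v)$ denotes the connected component of $G_{\geq 2}$ containing $v$. Let $d^+(L_0)$ denote the number of edges between $L_0$ and $L_1$. A single reaching attempt does the following: pick a uniformly random edge between $L_0$ and $L_1$, let $u$ be its $L_1$-endpoint; if $u$ has no neighbor in $L_2$ the attempt fails; otherwise pick a random neighbor $v\in L_2$ of $u$, compute the component $C(v)$ (by BFS), and output a uniformly random node $w \in C(v)$. The procedure Reach repeats attempts until one succeeds and returns its output node together with its reachability score. For $v \in L_{\geq 2}$, the reachability score $rs(v)$ is the value such that a single attempt outputs (reaches) $v$ with probability $rs(v)/d^+(L_0)$. Procedure Sample (with inputs $\bar\ell_{\geq 2}$ and $rs_0>0$): let $\bar n = |L_0| + |L_1| + \bar\ell_{\geq 2}$; with probability $|L_0|/\bar n$ output a uniformly random node of $L_0$; with probability $|L_1|/\bar n$ output a uniformly random node of $L_1$; otherwise repeat: call Reach to get a node $w \in L_{\geq 2}$ and $rs(w)$, and accept and output $w$ with probability $\min(1, rs_0/rs(w))$,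 else repeat. *)

theory Defs
  imports "HOL-Probability.Probability"
begin

definition simple_graph :: "nat set \<Rightarrow> (nat \<Rightarrow> nat \<Rightarrow> bool) \<Rightarrow> bool" where
  "simple_graph V adj \<longleftrightarrow> finite V \<and> (\<forall>x y. adj x y \<longrightarrow> x \<in> V \<and> y \<in> V)
     \<and> (\<forall>x y. adj x y \<longrightarrow> adj y x) \<and> (\<forall>x. \<not> adj x x)"

definition layer1 :: "nat set \<Rightarrow> (nat \<Rightarrow> nat \<Rightarrow> bool) \<Rightarrow> nat set \<Rightarrow> nat set" where
  "layer1 V adj L0 = {u \<in> V. u \<notin> L0 \<and> (\<exists>x\<in>L0. adj x u)}"

definition layer2 :: "nat set \<Rightarrow> (nat \<Rightarrow> nat \<Rightarrow> bool) \<Rightarrow> nat set \<Rightarrow> nat set" where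
  "layer2 V adj L0 = {w \<in> V. w \<notin> L0 \<and> w \<notin> layer1 V adj L0 \<and> (\<exists>u\<in>layer1 V adj L0. adj u w)}"

definition layer_ge2 :: "nat set \<Rightarrow> (nat \<Rightarrow> nat \<Rightarrow> bool) \<Rightarrow> nat set \<Rightarrow> nat set" where
  "layer_ge2 V adj L0 = V - (L0 \<union> layer1 V adj L0)"

definition adj_ge2 :: "nat set \<Rightarrow> (nat \<Rightarrow> nat \<Rightarrow> bool) \<Rightarrow> nat set \<Rightarrow> nat \<Rightarrow> nat \<Rightarrow> bool" where
  "adj_ge2 V adj L0 x y \<longleftrightarrow> x \<in> layer_ge2 V adj L0 \<and> y \<in> layer_ge2 V adj L0 \<and> adj x y
     \<and> \<not> (x \<in> layer2 V adj L0 \<and> y \<in> layer2 V adj L0)"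

definition comp_ge2 :: "nat set \<Rightarrow> (nat \<Rightarrow> nat \<Rightarrow> bool) \<Rightarrow> nat set \<Rightarrow> nat \<Rightarrow> nat set" where
  "comp_ge2 V adj L0 v = {w. (adj_ge2 V adj L0)\<^sup>*\<^sup>* v w}"

definition out_edges :: "nat set \<Rightarrow> (nat \<Rightarrow> nat \<Rightarrow> bool) \<Rightarrow> nat set \<Rightarrow> (nat \<times> nat) set" where
  "out_edges V adj L0 = {(x, u). x \<in> L0 \<and> u \<in> layer1 V adj L0 \<and> adj x u}"

definition dplus :: "nat set \<Rightarrow> (nat \<Rightarrow> nat \<Rightarrow> bool) \<Rightarrow> nat set \<Rightarrow> nat" where
  "dplus V adj L0 = card (out_edges V adj L0)"

(* A single reaching attempt; None = failure, Some w = reaches w *)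
definition attempt :: "nat set \<Rightarrow> (nat \<Rightarrow> nat \<Rightarrow> bool) \<Rightarrow> nat set \<Rightarrow> nat option pmf" where
  "attempt V adj L0 =
     bind_pmf (pmf_of_set (out_edges V adj L0)) (\<lambda>(x, u).
       (let N = {v \<in> layer2 V adj L0. adj u v} in
        if N = {} then return_pmf None
        else bind_pmf (pmf_of_set N) (\<lambda>v. map_pmf Some (pmf_of_set (comp_ge2 V adj L0 v)))))"

definition rs :: "nat set \<Rightarrow> (nat \<Rightarrow> nat \<Rightarrow> bool) \<Rightarrow> nat set \<Rightarrow> nat \<Rightarrow> real" where
  "rs V adj L0 v = real (dplus V adj L0) * pmf (attempt V adj L0) (Some v)"

(* Output distribution of "repeat independent trials p until one succeeds (Some w),
   output w": the distribution of a trial conditioned on success. *)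
definition repeat_until_success :: "'b option pmf \<Rightarrow> 'b pmf" where
  "repeat_until_success p = map_pmf the (cond_pmf p {x. x \<noteq> None})"

definition reach :: "nat set \<Rightarrow> (nat \<Rightarrow> nat \<Rightarrow> bool) \<Rightarrow> nat set \<Rightarrow> nat pmf" where
  "reach V adj L0 = repeat_until_success (attempt V adj L0)"

definition sample :: "nat set \<Rightarrow> (nat \<Rightarrow> nat \<Rightarrow> bool) \<Rightarrow> nat set \<Rightarrow> real \<Rightarrow> real \<Rightarrow> nat pmf" where
  "sample V adj L0 lbar rs0 =
     (let L1 = layer1 V adj L0;
          nbar = real (card L0) + real (card L1) + lbar
      in bind_pmf (pmf_of_list [(0::nat, real (card L0) / nbar), (1, real (card L1) / nbar), (2, lbar / nbar)])
           (\<lambda>i. if i = 0 then pmf_of_set L0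
                else if i = 1 then pmf_of_set L1
                else repeat_until_success
                       (bind_pmf (reach V adj L0) (\<lambda>w.
                          map_pmf (\<lambda>b. if b then Some w else None)
                            (bernoulli_pmf (min 1 (rs0 / rs V adj L0 w)))))))"

definition tv_dist :: "'b pmf \<Rightarrow> 'b pmf \<Rightarrow> real" where
  "tv_dist p q = (1/2) * infsum (\<lambda>x. \<bar>pmf p x - pmf q x\<bar>) UNIV"

end

theory Submission
  imports Defs
begin


lemma rus_pmf:
  assumes "set_pmf p \<inter> {x. x \<noteq> None} \<noteq> {}"
  shows "pmf (repeat_until_success p) u = pmf p (Some u) / measure p {x. x \<noteq> None}"
proof -
  let ?c = "cond_pmf p {x. x \<noteq> None}"
  have pc: "pmf ?c x = (if x \<in> {x. x \<noteq> None} then pmf p x / measure p {x. x \<noteq> None} else 0)" for x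
    using pmf_cond[OF assms] by simp
  have sc: "set_pmf ?c = set_pmf p \<inter> {x. x \<noteq> None}" using set_cond_pmf[OF assms] .
  show ?thesis
  proof (cases "Some u \<in> set_pmf ?c")
    case True
    have inj: "inj_on the (set_pmf ?c)" unfolding sc by (auto intro!: inj_onI)
    have "pmf (map_pmf the ?c) (the (Some u)) = pmf ?c (Some u)" by (rule pmf_map_inj[OF inj True])
    then show ?thesis unfolding repeat_until_success_def using pc[of "Some u"] by simp
  next
    case False
    have "u \<notin> the ` set_pmf ?c" using False unfolding sc by force
    then have "pmf (map_pmf the ?c) u = 0" by (rule pmf_map_outside)
    moreover have "pmf ?c (Some u) = 0" using False by (simp add: set_pmf_eq)
    ultimately show ?thesis unfolding repeat_until_success_def using pc[of "Some u"] by simp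
  qed
qed

lemma inner_pmf:
  fixes q :: "nat \<Rightarrow> real"
  assumes "\<And>w. 0 \<le> q w" "\<And>w. q w \<le> 1"
  shows "pmf (bind_pmf R (\<lambda>w. map_pmf (\<lambda>b. if b then Some w else None) (bernoulli_pmf (q w)))) (Some v)
         = pmf R v * q v"
proof -
  have e: "pmf (map_pmf (\<lambda>b. if b then Some w else None) (bernoulli_pmf (q w))) (Some v)
        = (if w = v then q v else 0)" for w
  proof (cases "w = v")
    case True
    have "pmf (map_pmf (\<lambda>b. if b then Some w else None) (bernoulli_pmf (q w))) (Some v)
       = pmf (map_pmf (\<lambda>b. if b then Some w else None) (bernoulli_pmf (q w))) ((\<lambda>b. if b then Some w else None) True)"
      using True by simp
    also have "\<dots> = pmf (bernoulli_pmf (q w)) True"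
      by (rule pmf_map_inj') (auto intro!: injI split: if_splits)
    finally show ?thesis using True assms by simp
  next
    case False
    then show ?thesis by (auto simp: pmf_map vimage_def split: if_splits)
  qed
  show ?thesis unfolding pmf_bind e
    by (subst integral_measure_pmf_real[where A="{v}"]) (auto split: if_splits)
qed

lemma branch_bound:
  fixes att :: "nat option pmf" and d rs0 :: real and A :: "nat set"
  assumes d: "d > 0" and r0: "rs0 > 0" and fA: "finite A" and nA: "A \<noteq> {}"
    and hA: "\<forall>u\<in>A. d * pmf att (Some u) \<ge> rs0"
  defines "B \<equiv> repeat_until_success (bind_pmf (repeat_until_success att) (\<lambda>w.
       map_pmf (\<lambda>b. if b then Some w else None) (bernoulli_pmf (min 1 (rs0 / (d * pmf att (Some w)))))))"
  shows "pmf B w \<le> 1 / real (card A) \<and> (pmf att (Some w) = 0 \<longrightarrow> pmf B w = 0)"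
proof -
  define a where "a u = pmf att (Some u)" for u
  define S where "S = {x :: nat option. x \<noteq> None}"
  define q where "q w = min 1 (rs0 / (d * a w))" for w
  obtain u0 where u0: "u0 \<in> A" using nA by blast
  have "a u0 \<ge> rs0 / d" using hA u0 d unfolding a_def by (simp add: field_simps mult.commute)
  then have "a u0 > 0" using r0 d by (smt (verit) divide_pos_pos)
  then have "Some u0 \<in> set_pmf att" unfolding a_def by (simp add: set_pmf_iff)
  then have ne: "set_pmf att \<inter> S \<noteq> {}" unfolding S_def by blast
  define s where "s = measure att S"
  have s: "s > 0" unfolding s_def S_def using measure_pmf_posI[OF \<open>Some u0 \<in> set_pmf att\<close>] by auto
  have reach: "pmf (repeat_until_success att) u = a u / s" for u
    using rus_pmf[of att u] ne unfolding a_def s_def S_def by simp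
  have q01: "0 \<le> q w" "q w \<le> 1" for w unfolding q_def using r0 d
    by (auto simp: a_def intro!: divide_nonneg_nonneg)
  define P where "P = bind_pmf (repeat_until_success att) (\<lambda>w.
       map_pmf (\<lambda>b. if b then Some w else None) (bernoulli_pmf (q w)))"
  have B: "B = repeat_until_success P" unfolding B_def P_def q_def a_def ..
  have Pw: "pmf P (Some w) = a w / s * q w" for w
    unfolding P_def using inner_pmf[of q, OF q01] reach by simp
  have Pub: "pmf P (Some w) \<le> rs0 / (d * s)" for w
  proof (cases "a w = 0")
    case True then show ?thesis using Pw r0 d s by simp
  next
    case False
    then have aw: "a w > 0" unfolding a_def by (simp add: order_le_neq_trans)
    have "q w \<le> rs0 / (d * a w)" unfolding q_def by simp
    then have "a w / s * q w \<le> a w / s * (rs0 / (d * a w))"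
      using aw s by (intro mult_left_mono) auto
    also have "\<dots> = rs0 / (d * s)" using aw by (simp add: field_simps)
    finally show ?thesis using Pw by simp
  qed
  have PA: "pmf P (Some u) = rs0 / (d * s)" if "u \<in> A" for u
  proof -
    have au: "d * a u \<ge> rs0" using hA that unfolding a_def by auto
    then have aw: "a u > 0" using r0 d by (smt (verit) mult_nonneg_nonpos)
    have "rs0 / (d * a u) \<le> 1" using au aw d by (simp add: field_simps)
    then have "q u = rs0 / (d * a u)" unfolding q_def by simp
    then show ?thesis using Pw aw by (simp add: field_simps)
  qed
  have "measure P (Some ` A) = (\<Sum>u\<in>Some ` A. pmf P u)"
    using fA by (simp add: measure_measure_pmf_finite)
  also have "\<dots> = (\<Sum>u\<in>A. pmf P (Some u))" by (simp add: sum.reindex)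
  also have "\<dots> = real (card A) * (rs0 / (d * s))" using PA by simp
  finally have mA: "measure P (Some ` A) = real (card A) * (rs0 / (d * s))" .
  have "measure P (Some ` A) \<le> measure P S"
    unfolding S_def by (intro measure_pmf.finite_measure_mono) auto
  then have mS: "measure P S \<ge> real (card A) * (rs0 / (d * s))" using mA by simp
  have pos: "rs0 / (d * s) > 0" using r0 d s by simp
  have "pmf P (Some u0) > 0" using PA[OF u0] pos by simp
  then have "Some u0 \<in> set_pmf P" by (simp add: set_pmf_iff)
  then have neP: "set_pmf P \<inter> S \<noteq> {}" unfolding S_def by blast
  have Bw: "pmf B w = pmf P (Some w) / measure P S"
    unfolding B using rus_pmf[of P w] neP unfolding S_def by simp
  have cA: "real (card A) \<ge> 1" using fA nA by (simp add: Suc_le_eq card_gt_0_iff)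
  have pos2: "real (card A) * (rs0 / (d * s)) > 0" using pos cA by (intro mult_pos_pos) auto
  have "pmf B w \<le> (rs0 / (d * s)) / (real (card A) * (rs0 / (d * s)))"
    unfolding Bw using Pub mS pos pos2
    by (intro frac_le) (auto intro: pmf_nonneg mult_pos_pos)
  also have "\<dots> = 1 / real (card A)" using s d r0 cA by (simp add: field_simps)
  finally have 1: "pmf B w \<le> 1 / real (card A)" .
  have 2: "pmf B w = 0" if "pmf att (Some w) = 0"
    using that unfolding Bw Pw a_def by simp
  show ?thesis using 1 2 by blast
qed

lemma graph_facts:
  assumes g: "simple_graph V adj" and L0: "L0 \<subseteq> V"
  shows "finite V" "layer1 V adj L0 \<subseteq> V" "layer_ge2 V adj L0 \<subseteq> V"
    "L0 \<inter> layer1 V adj L0 = {}"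
    "real (card V) = real (card L0) + real (card (layer1 V adj L0)) + real (card (layer_ge2 V adj L0))"
    "set_pmf (attempt V adj L0) \<subseteq> insert None (Some ` layer_ge2 V adj L0)"
proof -
  show fV: "finite V" using g unfolding simple_graph_def by blast
  show s1: "layer1 V adj L0 \<subseteq> V" unfolding layer1_def by blast
  show s2: "layer_ge2 V adj L0 \<subseteq> V" unfolding layer_ge2_def by blast
  show d: "L0 \<inter> layer1 V adj L0 = {}" unfolding layer1_def by blast
  have "V = (L0 \<union> layer1 V adj L0) \<union> layer_ge2 V adj L0" using L0 s1 unfolding layer_ge2_def by blast
  moreover have "card ((L0 \<union> layer1 V adj L0) \<union> layer_ge2 V adj L0) = card (L0 \<union> layer1 V adj L0) + card (layer_ge2 V adj L0)"
    using fV L0 s1 s2 by (intro card_Un_disjoint) (auto intro: finite_subset simp: layer_ge2_def)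
  moreover have "card (L0 \<union> layer1 V adj L0) = card L0 + card (layer1 V adj L0)"
    using fV L0 s1 d by (intro card_Un_disjoint) (auto intro: finite_subset)
  ultimately show "real (card V) = real (card L0) + real (card (layer1 V adj L0)) + real (card (layer_ge2 V adj L0))"
    by simp
  have l2: "layer2 V adj L0 \<subseteq> layer_ge2 V adj L0" unfolding layer2_def layer_ge2_def by blast
  have comp: "comp_ge2 V adj L0 v \<subseteq> layer_ge2 V adj L0" if "v \<in> layer_ge2 V adj L0" for v
  proof
    fix w assume "w \<in> comp_ge2 V adj L0 v"
    then have "(adj_ge2 V adj L0)\<^sup>*\<^sup>* v w" unfolding comp_ge2_def by simp
    then show "w \<in> layer_ge2 V adj L0"
      by (induction rule: rtranclp_induct) (auto simp: that adj_ge2_def)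
  qed
  have vin: "v \<in> comp_ge2 V adj L0 v" for v unfolding comp_ge2_def by simp
  show "set_pmf (attempt V adj L0) \<subseteq> insert None (Some ` layer_ge2 V adj L0)"
  proof
    fix z assume "z \<in> set_pmf (attempt V adj L0)"
    then obtain x u where xu: "z \<in> set_pmf ((let N = {v \<in> layer2 V adj L0. adj u v} in
        if N = {} then return_pmf None
        else bind_pmf (pmf_of_set N) (\<lambda>v. map_pmf Some (pmf_of_set (comp_ge2 V adj L0 v)))))"
      unfolding attempt_def by (auto simp: set_bind_pmf)
    show "z \<in> insert None (Some ` layer_ge2 V adj L0)"
    proof (cases "{v \<in> layer2 V adj L0. adj u v} = {}")
      case True then show ?thesis using xu by (simp add: Let_def)
    next
      case False
      have fN: "finite {v \<in> layer2 V adj L0. adj u v}"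
        using fV by (rule finite_subset[rotated]) (auto simp: layer2_def)
      then obtain v where v: "v \<in> layer2 V adj L0" and
        zv: "z \<in> set_pmf (map_pmf Some (pmf_of_set (comp_ge2 V adj L0 v)))"
      proof -
        have "z \<in> set_pmf (bind_pmf (pmf_of_set {v \<in> layer2 V adj L0. adj u v}) (\<lambda>v. map_pmf Some (pmf_of_set (comp_ge2 V adj L0 v))))"
          using xu unfolding Let_def if_not_P[OF False] .
        then show ?thesis using that fN False by (auto simp: set_bind_pmf)
      qed
      have vg: "v \<in> layer_ge2 V adj L0" using v l2 by blast
      have fC: "finite (comp_ge2 V adj L0 v)" using comp[OF vg] s2 fV by (meson finite_subset)
      have "comp_ge2 V adj L0 v \<noteq> {}" using vin by blast
      then show ?thesis using zv fC comp[OF vg] by auto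
    qed
  qed
qed

lemma sample_pmf:
  fixes lbar rs0 :: real and V L0 :: "nat set" and adj
  defines "nbar \<equiv> real (card L0) + real (card (layer1 V adj L0)) + lbar"
  defines "B \<equiv> repeat_until_success
                       (bind_pmf (reach V adj L0) (\<lambda>w.
                          map_pmf (\<lambda>b. if b then Some w else None)
                            (bernoulli_pmf (min 1 (rs0 / rs V adj L0 w)))))"
  assumes nb: "nbar > 0" and lb: "lbar \<ge> 0"
  shows "pmf (sample V adj L0 lbar rs0) x =
     real (card L0) / nbar * pmf (pmf_of_set L0) x
     + real (card (layer1 V adj L0)) / nbar * pmf (pmf_of_set (layer1 V adj L0)) x
     + lbar / nbar * pmf B x"
proof -
  let ?xs = "[(0::nat, real (card L0) / nbar), (1, real (card (layer1 V adj L0)) / nbar), (2, lbar / nbar)]"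
  have wf: "pmf_of_list_wf ?xs"
    using nb lb by (intro pmf_of_list_wfI) (auto simp: nbar_def add_divide_distrib[symmetric])
  have p: "pmf (pmf_of_list ?xs) 0 = real (card L0) / nbar"
       "pmf (pmf_of_list ?xs) 1 = real (card (layer1 V adj L0)) / nbar"
       "pmf (pmf_of_list ?xs) 2 = lbar / nbar"
    using wf by (simp_all add: pmf_pmf_of_list)
  have sp: "set_pmf (pmf_of_list ?xs) \<subseteq> {0,1,2}" using set_pmf_of_list[OF wf] by simp
  show ?thesis
    unfolding sample_def Let_def nbar_def[symmetric] B_def[symmetric] pmf_bind
    apply (subst integral_measure_pmf_real[where A="{0,1,2}"])
    using sp apply auto[2]
    using p by (simp add: algebra_simps)
qed



lemma Kd: fixes e d :: real assumes "0 \<le> e" "0 \<le> d" "e + d \<le> 1/2"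
  shows "1 \<le> (1 + e + d + 2 * (e + d)^2) * (1 - d)"
proof -
  define X where "X = (e + d)^2"
  have X: "X = e*e + 2*e*d + d*d" unfolding X_def by (simp add: power2_eq_square algebra_simps)
  have "1 * X \<le> (2 * (1 - d)) * X" using assms unfolding X_def
    by (intro mult_right_mono) auto
  moreover have "e * (1 - d) \<ge> 0" "e * d \<ge> 0" "e * e \<ge> 0" using assms by simp_all
  moreover have "(1 + e + d + 2 * X) * (1 - d) = 1 - d*d + e * (1 - d) + (2 * (1 - d)) * X"
    by (simp add: algebra_simps)
  ultimately show ?thesis unfolding X_def[symmetric] using X by linarith
qed

lemma Ke: fixes e d :: real assumes "0 \<le> e" "0 \<le> d" "e + d \<le> 1/2"
  shows "1 + d \<le> (1 + e + d + 2 * (e + d)^2) * (1 - e)"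
proof -
  define X where "X = (e + d)^2"
  have X: "X = e*e + 2*e*d + d*d" unfolding X_def by (simp add: power2_eq_square algebra_simps)
  have "1 * X \<le> (2 * (1 - e)) * X" using assms unfolding X_def
    by (intro mult_right_mono) auto
  moreover have "e * d \<ge> 0" "d * d \<ge> 0" using assms by simp_all
  moreover have "(1 + e + d + 2 * X) * (1 - e) = 1 + d - e*e - e*d + (2 * (1 - e)) * X"
    by (simp add: algebra_simps)
  ultimately show ?thesis unfolding X_def[symmetric] using X by linarith
qed

lemma ineq1: fixes e d n nb :: real assumes "0 \<le> e" "0 \<le> d" "e + d \<le> 1/2" "n > 0" "nb \<ge> (1 - d) * n"
  shows "1 / nb \<le> (1 + e + d + 2 * (e + d)^2) / n"
proof -
  have p: "(1 - d) * n > 0" using assms by simp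
  have "nb > 0" using p assms by linarith
  then have "1 / nb \<le> 1 / ((1 - d) * n)" using assms p mult_pos_pos[OF \<open>nb > 0\<close> p] by (intro divide_left_mono) auto
  also have "\<dots> \<le> ((1 + e + d + 2 * (e + d)^2) * (1 - d)) / ((1 - d) * n)"
    using Kd[OF assms(1-3)] p by (intro divide_right_mono) auto
  also have "\<dots> = (1 + e + d + 2 * (e + d)^2) / n"
  proof -
    have "1 - d \<noteq> 0" using assms by linarith
    then show ?thesis using assms(4) by simp
  qed
  finally show ?thesis .
qed

lemma ineq2: fixes e d c m l cA :: real
  assumes "0 \<le> e" "0 \<le> d" "e + d \<le> 1/2" "c \<ge> 0" "m > 0" "(1 - d) * m \<le> l" "l \<le> (1 + d) * m"
    "cA \<ge> (1 - e) * m"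
  shows "l / (c + l) * (1 / cA) \<le> (1 + e + d + 2 * (e + d)^2) / (c + m)"
proof -
  have "(1 - d) * m > 0" using assms by (intro mult_pos_pos) auto
  then have l0: "l > 0" using assms by linarith
  have em: "(1 - e) * m > 0" using assms by simp
  have "l * (c + m) \<le> (1 + d) * m * (c + l)"
  proof -
    have "l * c \<le> (1 + d) * m * c" using assms by (intro mult_right_mono) auto
    moreover have "0 \<le> d * m * l" using assms l0 by simp
    ultimately show ?thesis by (simp add: algebra_simps)
  qed
  then have a: "l / (c + l) \<le> (1 + d) * m / (c + m)" using l0 assms by (simp add: field_simps)
  have "cA > 0" using em assms by linarith
  then have b: "1 / cA \<le> 1 / ((1 - e) * m)" using assms em mult_pos_pos[OF \<open>cA > 0\<close> em] by (intro divide_left_mono) auto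
  have "l / (c + l) * (1 / cA) \<le> (1 + d) * m / (c + m) * (1 / ((1 - e) * m))"
    using a b l0 assms em \<open>cA > 0\<close> by (intro mult_mono) auto
  also have "\<dots> = (1 + d) / ((1 - e) * (c + m))"
  proof -
    have "c + m \<noteq> 0" "1 - e \<noteq> 0" "m \<noteq> 0" using assms by linarith+
    have "(1 + d) * m / (c + m) * (1 / ((1 - e) * m)) = ((1 + d) * m) / (((1 - e) * (c + m)) * m)"
      by (simp add: ac_simps)
    also have "\<dots> = (1 + d) / ((1 - e) * (c + m))"
      using \<open>m \<noteq> 0\<close> by (rule nonzero_mult_divide_mult_cancel_right)
    finally show ?thesis .
  qed
  also have "\<dots> \<le> ((1 + e + d + 2 * (e + d)^2) * (1 - e)) / ((1 - e) * (c + m))"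
    using Ke[OF assms(1-3)] em assms by (intro divide_right_mono) auto
  also have "\<dots> = (1 + e + d + 2 * (e + d)^2) / (c + m)"
  proof -
    have "1 - e \<noteq> 0" using assms by linarith
    then show ?thesis by simp
  qed
  finally show ?thesis .
qed


lemma tv_bound:
  fixes p :: "nat pmf" and V :: "nat set" and K :: real
  assumes fV: "finite V" and Vne: "V \<noteq> {}" and K: "K \<ge> 1"
    and pb: "\<And>x. pmf p x \<le> (if x \<in> V then K / real (card V) else 0)"
  shows "tv_dist p (pmf_of_set V) \<le> K - 1"
proof -
  define n where "n = real (card V)"
  have n: "n > 0" unfolding n_def using fV Vne by (simp add: card_gt_0_iff)
  define f where "f x = \<bar>pmf p x - pmf (pmf_of_set V) x\<bar>" for x
  have out: "pmf p x = 0" if "x \<notin> V" for x using pb[of x] that pmf_nonneg[of p x] by simp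
  have "infsum f UNIV = infsum f V"
    by (rule infsum_cong_neutral) (auto simp: f_def out fV Vne)
  also have "\<dots> = sum f V" using fV by simp
  finally have inf: "infsum f UNIV = sum f V" .
  have sp: "set_pmf p \<subseteq> V" using out by (force simp: set_pmf_iff)
  have s1: "(\<Sum>x\<in>V. pmf p x) = 1" by (rule sum_pmf_eq_1[OF fV sp])
  have pt: "f x \<le> 2 * ((K - 1) / n) - (pmf p x - 1 / n)" if "x \<in> V" for x
  proof -
    have u: "pmf (pmf_of_set V) x = 1 / n" using that fV Vne by (simp add: n_def)
    have "pmf p x \<le> K / n" using pb[of x] that by (simp add: n_def)
    then have "pmf p x - 1 / n \<le> (K - 1) / n" by (simp add: diff_divide_distrib)
    moreover have "(K - 1) / n \<ge> 0" using K n by simp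
    ultimately show ?thesis unfolding f_def u by linarith
  qed
  have "sum f V \<le> (\<Sum>x\<in>V. 2 * ((K - 1) / n) - (pmf p x - 1 / n))"
    using pt by (rule sum_mono)
  also have "\<dots> = n * (2 * ((K - 1) / n)) - ((\<Sum>x\<in>V. pmf p x) - n * (1 / n))"
    by (simp add: sum_subtractf n_def)
  also have "\<dots> = 2 * (K - 1)" using n s1 by simp
  finally have "sum f V \<le> 2 * (K - 1)" .
  then show ?thesis unfolding tv_dist_def using inf unfolding f_def by simp
qed

lemma unif_term:
  fixes S :: "nat set" and nb :: real
  assumes "finite S"
  shows "real (card S) / nb * pmf (pmf_of_set S) x = indicator S x / nb"
proof (cases "S = {}")
  case True then show ?thesis by simp
next
  case False
  then have "card S > 0" using assms by (simp add: card_gt_0_iff)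
  then show ?thesis using assms False by (simp add: indicator_def)
qed

lemma main_pt:
  fixes V L0 :: "nat set" and adj and e d lbar rs0 :: real
  assumes g: "simple_graph V adj" and Vne: "V \<noteq> {}" and L0: "L0 \<subseteq> V"
    and e: "e \<ge> 0" and d: "d \<ge> 0" and ed: "e + d \<le> 1/2"
    and lo: "(1 - d) * real (card (layer_ge2 V adj L0)) \<le> lbar"
    and hi: "lbar \<le> (1 + d) * real (card (layer_ge2 V adj L0))"
    and r0: "rs0 > 0"
    and hA: "real (card {v \<in> layer_ge2 V adj L0. rs V adj L0 v \<ge> rs0}) \<ge> (1 - e) * real (card (layer_ge2 V adj L0))"
  shows "pmf (sample V adj L0 lbar rs0) x \<le> (if x \<in> V then (1 + e + d + 2 * (e + d)^2) / real (card V) else 0)"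
proof -
  note gf = graph_facts[OF g L0]
  define L1 where "L1 = layer1 V adj L0"
  define L2 where "L2 = layer_ge2 V adj L0"
  define A where "A = {v \<in> L2. rs V adj L0 v \<ge> rs0}"
  define c0 where "c0 = real (card L0)"
  define c1 where "c1 = real (card L1)"
  define m where "m = real (card L2)"
  define n where "n = real (card V)"
  define nbar where "nbar = c0 + c1 + lbar"
  define K where "K = 1 + e + d + 2 * (e + d)^2"
  define B where "B = repeat_until_success
                       (bind_pmf (reach V adj L0) (\<lambda>w.
                          map_pmf (\<lambda>b. if b then Some w else None)
                            (bernoulli_pmf (min 1 (rs0 / rs V adj L0 w)))))"
  have fV: "finite V" using gf by blast
  have fL0: "finite L0" using fV L0 by (rule finite_subset[rotated])
  have fL1: "finite L1" using fV gf unfolding L1_def by (meson finite_subset)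
  have fL2: "finite L2" using fV gf unfolding L2_def by (meson finite_subset)
  have nsum: "n = c0 + c1 + m" using gf unfolding n_def c0_def c1_def m_def L1_def L2_def by blast
  have n: "n > 0" unfolding n_def using fV Vne by (simp add: card_gt_0_iff)
  have c0: "c0 \<ge> 0" and c1: "c1 \<ge> 0" and m0: "m \<ge> 0" unfolding c0_def c1_def m_def by simp_all
  have lo': "(1 - d) * m \<le> lbar" and hi': "lbar \<le> (1 + d) * m" using lo hi unfolding m_def L2_def by simp_all
  have "1 - d \<ge> 0" using ed e by linarith
  then have "(1 - d) * m \<ge> 0" using m0 by simp
  then have lb: "lbar \<ge> 0" using lo' by linarith
  have nbn: "nbar \<ge> (1 - d) * n"
  proof -
    have "d * c0 \<ge> 0" "d * c1 \<ge> 0" using d c0 c1 by simp_all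
    then show ?thesis unfolding nbar_def nsum using lo' by (simp add: algebra_simps)
  qed
  have "(1 - d) * n > 0" using n ed d e by (intro mult_pos_pos) linarith+
  then have nb: "nbar > 0" using nbn by linarith
  have sp: "pmf (sample V adj L0 lbar rs0) x = indicator L0 x / nbar + indicator L1 x / nbar + lbar / nbar * pmf B x"
    using sample_pmf[of L0 V adj lbar rs0 x] nb lb unif_term[OF fL0, of nbar x] unif_term[OF fL1, of nbar x]
    unfolding nbar_def c0_def c1_def L1_def B_def by simp
  have T2: "(x \<notin> L2 \<longrightarrow> lbar / nbar * pmf B x = 0) \<and> (x \<in> L2 \<longrightarrow> lbar / nbar * pmf B x \<le> K / n)"
  proof (cases "m = 0")
    case True
    then have "lbar = 0" using lo' hi' by simp
    moreover have "L2 = {}" using True fL2 unfolding m_def by simp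
    ultimately show ?thesis by simp
  next
    case False
    then have mp: "m > 0" using m0 by simp
    have cA: "real (card A) \<ge> (1 - e) * m" using hA unfolding A_def m_def L2_def by simp
    have "(1 - e) * m > 0" using mp ed d e by (intro mult_pos_pos) linarith+
    then have "card A > 0" using cA by linarith
    then have fA: "finite A" and nA: "A \<noteq> {}" by (auto simp: card_gt_0_iff)
    obtain u where u: "u \<in> A" using nA by blast
    then have "rs V adj L0 u > 0" using r0 unfolding A_def by auto
    then have dp: "real (dplus V adj L0) > 0" unfolding rs_def
      by (metis gr0I mult_zero_left of_nat_0 of_nat_0_less_iff)
    have hA': "\<forall>u\<in>A. real (dplus V adj L0) * pmf (attempt V adj L0) (Some u) \<ge> rs0"
      unfolding A_def rs_def by simp
    have bb: "pmf B x \<le> 1 / real (card A) \<and> (pmf (attempt V adj L0) (Some x) = 0 \<longrightarrow> pmf B x = 0)"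
      using branch_bound[OF dp r0 fA nA hA', of x] unfolding B_def reach_def rs_def .
    have z: "lbar / nbar * pmf B x = 0" if "x \<notin> L2"
    proof -
      have "Some x \<notin> set_pmf (attempt V adj L0)" using gf(6) that unfolding L2_def by auto
      then have "pmf (attempt V adj L0) (Some x) = 0" by (simp add: set_pmf_iff)
      then show ?thesis using bb by simp
    qed
    have "lbar / nbar * pmf B x \<le> lbar / nbar * (1 / real (card A))"
      using bb lb nb by (intro mult_left_mono) auto
    also have "\<dots> = lbar / ((c0 + c1) + lbar) * (1 / real (card A))" unfolding nbar_def by simp
    also have "\<dots> \<le> K / ((c0 + c1) + m)" unfolding K_def
      by (rule ineq2[OF e d ed _ mp lo' hi' cA]) (use c0 c1 in simp)
    also have "\<dots> = K / n" using nsum by simp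
    finally show ?thesis using z by blast
  qed
  have i1: "1 / nbar \<le> K / n" unfolding K_def by (rule ineq1[OF e d ed n nbn])
  have V: "V = L0 \<union> L1 \<union> L2" using L0 gf unfolding L1_def L2_def layer_ge2_def by blast
  have dj: "L0 \<inter> L1 = {}" "L0 \<inter> L2 = {}" "L1 \<inter> L2 = {}"
    using gf unfolding L1_def L2_def layer_ge2_def by blast+
  show ?thesis
  proof -
    consider "x \<in> L0" | "x \<in> L1" | "x \<in> L2" | "x \<notin> V" using V by blast
    then have "pmf (sample V adj L0 lbar rs0) x \<le> (if x \<in> V then K / n else 0)"
    proof cases
      case 1
      then have "x \<notin> L1" "x \<notin> L2" using dj by blast+
      moreover have z: "lbar / nbar * pmf B x = 0" using T2 \<open>x \<notin> L2\<close> by blast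
      ultimately have "pmf (sample V adj L0 lbar rs0) x = 1 / nbar" unfolding sp z using 1 by simp
      then show ?thesis using i1 V 1 by simp
    next
      case 2
      then have "x \<notin> L0" "x \<notin> L2" using dj by blast+
      moreover have z: "lbar / nbar * pmf B x = 0" using T2 \<open>x \<notin> L2\<close> by blast
      ultimately have "pmf (sample V adj L0 lbar rs0) x = 1 / nbar" unfolding sp z using 2 by simp
      then show ?thesis using i1 V 2 by simp
    next
      case 3
      then have "x \<notin> L0" "x \<notin> L1" using dj by blast+
      then have "pmf (sample V adj L0 lbar rs0) x = lbar / nbar * pmf B x" unfolding sp by simp
      then show ?thesis using T2 V 3 by simp
    next
      case 4
      then have "x \<notin> L0" "x \<notin> L1" "x \<notin> L2" using V by blast+
      moreover have z: "lbar / nbar * pmf B x = 0" using T2 \<open>x \<notin> L2\<close> by blast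
      ultimately have "pmf (sample V adj L0 lbar rs0) x = 0" unfolding sp z by simp
      then show ?thesis using 4 by simp
    qed
    then show ?thesis unfolding K_def n_def .
  qed
qed

lemma inst:
  fixes V L0 :: "nat set" and adj and e d lbar rs0 :: real
  assumes H: "simple_graph V adj \<and> V \<noteq> {} \<and> L0 \<subseteq> V \<and>
        e \<ge> 0 \<and> d \<ge> 0 \<and> e + d \<le> 1/2 \<and>
        (1 - d) * real (card (layer_ge2 V adj L0)) \<le> lbar \<and>
        lbar \<le> (1 + d) * real (card (layer_ge2 V adj L0)) \<and>
        rs0 > 0 \<and>
        real (card {v \<in> layer_ge2 V adj L0. rs V adj L0 v \<ge> rs0})
          \<ge> (1 - e) * real (card (layer_ge2 V adj L0))"
  shows "tv_dist (sample V adj L0 lbar rs0) (pmf_of_set V) \<le> e + d + 2 * (e + d)\<^sup>2 \<and>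
        (\<forall>v. pmf (sample V adj L0 lbar rs0) v \<le> (1 + e + d + 2 * (e + d)\<^sup>2) / real (card V))"
proof -
  have pt: "pmf (sample V adj L0 lbar rs0) x \<le> (if x \<in> V then (1 + e + d + 2 * (e + d)^2) / real (card V) else 0)" for x
    using main_pt[of V adj L0 e d lbar rs0 x] H by blast
  have fV: "finite V" using H unfolding simple_graph_def by blast
  have K: "1 + e + d + 2 * (e + d)^2 \<ge> 1" using H by simp
  have "tv_dist (sample V adj L0 lbar rs0) (pmf_of_set V) \<le> (1 + e + d + 2 * (e + d)^2) - 1"
    using tv_bound[OF fV _ K pt] H by blast
  then have "tv_dist (sample V adj L0 lbar rs0) (pmf_of_set V) \<le> e + d + 2 * (e + d)\<^sup>2" by simp
  moreover have "pmf (sample V adj L0 lbar rs0) v \<le> (1 + e + d + 2 * (e + d)\<^sup>2) / real (card V)" for v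
    using pt[of v] K by (auto split: if_splits)
  ultimately show ?thesis by blast
qed


theorem theorem3p1:
  "\<exists>C c0. c0 > 0 \<and>
     (\<forall>V adj L0 (\<epsilon>::real) (\<delta>::real) lbar rs0.
        simple_graph V adj \<and> V \<noteq> {} \<and> L0 \<subseteq> V \<and>
        \<epsilon> \<ge> 0 \<and> \<delta> \<ge> 0 \<and> \<epsilon> + \<delta> \<le> c0 \<and>
        (1 - \<delta>) * real (card (layer_ge2 V adj L0)) \<le> lbar \<and>
        lbar \<le> (1 + \<delta>) * real (card (layer_ge2 V adj L0)) \<and>
        rs0 > 0 \<and>
        real (card {v \<in> layer_ge2 V adj L0. rs V adj L0 v \<ge> rs0})
          \<ge> (1 - \<epsilon>) * real (card (layer_ge2 V adj L0))
      \<longrightarrow>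
        tv_dist (sample V adj L0 lbar rs0) (pmf_of_set V)
          \<le> \<epsilon> + \<delta> + C * (\<epsilon> + \<delta>)\<^sup>2 \<and>
        (\<forall>v. pmf (sample V adj L0 lbar rs0) v
          \<le> (1 + \<epsilon> + \<delta> + C * (\<epsilon> + \<delta>)\<^sup>2) / real (card V)))"
  apply (rule exI[of _ 2], rule exI[of _ "1/2"])
  apply (rule conjI, simp)
  apply (intro allI impI)
  apply (rule inst)
  apply assumption
  done

end
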